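(* Let $k\ge 2$ be an integer and $i=4k-1$. Then for every $n\in\{2,3,\dots,k\}$, the numerical semigroup $S(i)$ admits a factorization into irreducible numerical semigroups of length $n$. Moreover, if $k\ge 3$, then $S(4k-1)$ admits at least two distinct factorizations of length $k$.
   Context: $\mathbb{N}$ denotes the non-negative integers. A numerical semigroup is a submonoid of $(\mathbb{N},+)$ with finite complement. A numerical semigroup is irreducible if it cannot be written as the intersection of two numerical semigroups properly containing it. For an odd integer $j\ge 3$, $T(j)=\{0,\tfrac{j+1}{2},\tfrac{j+1}{2}+1,\dots,j-1\}\cup\{n\in\mathbb{Z}:n\ge j+1\}$. For odd $i\ge5$, $S(i)=\langle 2,i\rangle\cap T(i)$, where $\langle 2,i\rangle=\{2x+iy:x,y\in\mathbb{N}\}$. Given a numerical semigroup $S$ and irreducible numerical semigroups $S_1,\dots,S_n$, the expression $S_1\cap\dots\cap S_n$ is a factorization of $S$ (of length $n$) if $S=S_1\cap\dots\cap S_n$ and $S\neq\bigcap_{j\in J}S_j$ for every nonempty proper subset $J\subsetneq\{1,\dots,n\}$. Two factorizations are distinct if their sets of factors $\{S_1,\dots,S_n\}$ differ. *)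

theory Defs
  imports Main
begin

definition numerical_semigroup :: "nat set \<Rightarrow> bool" where
  "numerical_semigroup S \<longleftrightarrow> 0 \<in> S \<and> (\<forall>a\<in>S. \<forall>b\<in>S. a + b \<in> S) \<and> finite (UNIV - S)"

definition irreducible_ns :: "nat set \<Rightarrow> bool" where
  "irreducible_ns S \<longleftrightarrow> numerical_semigroup S \<and>
     \<not> (\<exists>A B. numerical_semigroup A \<and> numerical_semigroup B \<and> S \<subset> A \<and> S \<subset> B \<and> S = A \<inter> B)"

definition Tsg :: "nat \<Rightarrow> nat set" where
  "Tsg j = {0} \<union> {(j + 1) div 2 ..< j} \<union> {j + 1 ..}"

definition gen2 :: "nat \<Rightarrow> nat set" where
  "gen2 i = {2 * x + i * y | x y. True}"

definition Ssg :: "nat \<Rightarrow> nat set" where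
  "Ssg i = gen2 i \<inter> Tsg i"

text \<open>A factorization of S, given by its (finite) set of factors; its length is the
  cardinality. Minimality forbids repeated factors, so sets suffice.\<close>
definition is_factorization :: "nat set \<Rightarrow> nat set set \<Rightarrow> bool" where
  "is_factorization S F \<longleftrightarrow> finite F \<and> F \<noteq> {} \<and> (\<forall>X\<in>F. irreducible_ns X) \<and> \<Inter>F = S \<and>
     (\<forall>G. G \<noteq> {} \<and> G \<subset> F \<longrightarrow> \<Inter>G \<noteq> S)"

end

theory Submission
  imports Defs
begin

definition Jsg :: "nat \<Rightarrow> nat set" where
  "Jsg g = {x. even x \<or> g < x}"

lemma gen2_iff:
  assumes "odd i"
  shows "x \<in> gen2 i \<longleftrightarrow> even x \<or> i \<le> x"
proof
  assume "x \<in> gen2 i"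
  then obtain a b where x: "x = 2*a + i*b" unfolding gen2_def by blast
  show "even x \<or> i \<le> x"
  proof (cases "b = 0")
    case True then show ?thesis using x by simp
  next
    case False then have "i \<le> i * b" by simp
    then show ?thesis using x by linarith
  qed
next
  assume h: "even x \<or> i \<le> x"
  show "x \<in> gen2 i"
  proof (cases "even x")
    case True
    then have "x = 2 * (x div 2) + i * 0" by simp
    then show ?thesis unfolding gen2_def by blast
  next
    case False
    with h have "i \<le> x" by simp
    with False assms have "x = 2 * ((x - i) div 2) + i * 1" by presburger
    then show ?thesis unfolding gen2_def by blast
  qed
qed

lemma Tsg_iff: "x \<in> Tsg j \<longleftrightarrow> x = 0 \<or> ((j+1) div 2 \<le> x \<and> x < j) \<or> j + 1 \<le> x"
  unfolding Tsg_def by auto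

lemma Ssg_iff:
  assumes "k \<ge> 1"
  shows "x \<in> Ssg (4*k-1) \<longleftrightarrow> x = 0 \<or> (even x \<and> 2*k \<le> x \<and> x < 4*k) \<or> 4*k \<le> x"
proof -
  have o: "odd (4*k-1)" using assms by presburger
  have d: "(4*k-1+1) div 2 = 2*k" using assms by simp
  show ?thesis unfolding Ssg_def using gen2_iff[OF o, of x] Tsg_iff[of x "4*k-1"] d assms
    by auto
qed

lemma ns_Tsg:
  assumes "odd f"
  shows "numerical_semigroup (Tsg f)"
proof -
  have "UNIV - Tsg f \<subseteq> {..f}" by (auto simp: Tsg_iff)
  then have "finite (UNIV - Tsg f)" using finite_subset by blast
  moreover have "\<forall>a\<in>Tsg f. \<forall>b\<in>Tsg f. a + b \<in> Tsg f"
  proof (intro ballI)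
    fix a b assume ab: "a \<in> Tsg f" "b \<in> Tsg f"
    have "(f+1) div 2 + (f+1) div 2 = f + 1" using assms by presburger
    then show "a + b \<in> Tsg f" using ab unfolding Tsg_iff by auto
  qed
  ultimately show ?thesis unfolding numerical_semigroup_def by (simp add: Tsg_iff)
qed

lemma ns_Jsg: "numerical_semigroup (Jsg g)"
proof -
  have "UNIV - Jsg g \<subseteq> {..g}" unfolding Jsg_def by auto
  then have "finite (UNIV - Jsg g)" using finite_subset by blast
  moreover have "\<forall>a\<in>Jsg g. \<forall>b\<in>Jsg g. a + b \<in> Jsg g"
    unfolding Jsg_def by auto
  ultimately show ?thesis unfolding numerical_semigroup_def Jsg_def by simp
qed

lemma irr_aux:
  assumes A: "numerical_semigroup A" and sub: "X \<subset> A" and fA: "f \<notin> A"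
    and cond: "\<forall>h. h \<notin> X \<longrightarrow> h \<noteq> f \<longrightarrow> h < f \<and> (f - h \<in> X \<or> 2*h = f)"
  shows False
proof -
  obtain h where h: "h \<in> A" "h \<notin> X" using sub by blast
  have hf: "h \<noteq> f" using h fA by blast
  have cl: "\<forall>a\<in>A. \<forall>b\<in>A. a + b \<in> A" using A unfolding numerical_semigroup_def by blast
  from cond h hf have "h < f" and c: "f - h \<in> X \<or> 2*h = f" by auto
  show False
  proof (cases "f - h \<in> X")
    case True
    then have "f - h \<in> A" using sub by blast
    then have "h + (f - h) \<in> A" using cl h by blast
    then show False using fA \<open>h < f\<close> by simp
  next
    case False
    then have "2*h = f" using c by blast
    then have "h + h \<in> A" using cl h by blast
    moreover have "h + h = f" using \<open>2*h = f\<close> by simp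
    ultimately show False using fA by simp
  qed
qed

lemma irr_suff:
  assumes X: "numerical_semigroup X" and fX: "f \<notin> X"
    and cond: "\<forall>h. h \<notin> X \<longrightarrow> h \<noteq> f \<longrightarrow> h < f \<and> (f - h \<in> X \<or> 2*h = f)"
  shows "irreducible_ns X"
  unfolding irreducible_ns_def
proof (intro conjI X notI)
  assume "\<exists>A B. numerical_semigroup A \<and> numerical_semigroup B \<and> X \<subset> A \<and> X \<subset> B \<and> X = A \<inter> B"
  then obtain A B where ab: "numerical_semigroup A" "numerical_semigroup B" "X \<subset> A" "X \<subset> B" "X = A \<inter> B"
    by blast
  have "f \<notin> A \<or> f \<notin> B" using ab(5) fX by blast
  then show False using irr_aux[OF ab(1) ab(3) _ cond] irr_aux[OF ab(2) ab(4) _ cond] by blast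
qed

lemma irr_Tsg:
  assumes "odd f" "f \<ge> 3"
  shows "irreducible_ns (Tsg f)"
proof (rule irr_suff[OF ns_Tsg, of f f])
  show "odd f" using assms by simp
  show "f \<notin> Tsg f" unfolding Tsg_iff using assms by auto
  show "\<forall>h. h \<notin> Tsg f \<longrightarrow> h \<noteq> f \<longrightarrow> h < f \<and> (f - h \<in> Tsg f \<or> 2 * h = f)"
    unfolding Tsg_iff using assms by auto
qed

lemma irr_Jsg:
  assumes "odd g"
  shows "irreducible_ns (Jsg g)"
proof (rule irr_suff[OF ns_Jsg, of g g])
  show "g \<notin> Jsg g" unfolding Jsg_def using assms by auto
  show "\<forall>h. h \<notin> Jsg g \<longrightarrow> h \<noteq> g \<longrightarrow> h < g \<and> (g - h \<in> Jsg g \<or> 2 * h = g)"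
    unfolding Jsg_def using assms by auto
qed

lemma fact_suff:
  assumes "finite F" "F \<noteq> {}" "\<forall>X\<in>F. irreducible_ns X" "\<Inter>F = S"
    and w: "\<forall>X\<in>F. \<exists>w. w \<notin> S \<and> (\<forall>Y\<in>F. Y \<noteq> X \<longrightarrow> w \<in> Y)"
  shows "is_factorization S F"
  unfolding is_factorization_def
proof (intro conjI assms allI impI)
  fix G assume G: "G \<noteq> {} \<and> G \<subset> F"
  then have GF: "G \<subseteq> F" "G \<noteq> F" by auto
  then obtain X where X: "X \<in> F" "X \<notin> G" by auto
  from w X(1) obtain v where v: "v \<notin> S" "\<forall>Y\<in>F. Y \<noteq> X \<longrightarrow> v \<in> Y" by auto
  have "v \<in> Y" if "Y \<in> G" for Y
  proof -
    have "Y \<in> F" "Y \<noteq> X" using that GF X by auto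
    then show ?thesis using v(2) by blast
  qed
  then have "v \<in> \<Inter>G" by blast
  then show "\<Inter>G \<noteq> S" using v(1) by blast
qed


lemma Tsg_inj: assumes "Tsg a = Tsg b" shows "a = b"
proof (rule ccontr)
  assume "a \<noteq> b"
  then have "a < b \<or> b < a" by linarith
  then show False
  proof
    assume "a < b"
    then have "b \<in> Tsg a" "b \<notin> Tsg b" by (auto simp: Tsg_iff)
    then show False using assms by simp
  next
    assume "b < a"
    then have "a \<in> Tsg b" "a \<notin> Tsg a" by (auto simp: Tsg_iff)
    then show False using assms by simp
  qed
qed

lemma notin_Tsg_self: "0 < f \<Longrightarrow> f \<notin> Tsg f"
  by (simp add: Tsg_iff)

lemma odd_hit:
  assumes k: "k \<ge> (1::nat)" and x: "odd x" "x < 4*k-1" and gx: "4*k-1-2*m < x" and mk: "m < k"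
  shows "\<exists>j<m. 4*k-1-2*j = x"
proof -
  obtain q where q: "x = 2*q+1" using x(1) oddE by blast
  have "4*k-1-2*(2*k-1-q) = x" "2*k-1-q < m" using q x gx mk k by linarith+
  then show ?thesis by blast
qed

definition FT :: "nat \<Rightarrow> nat \<Rightarrow> nat set set" where
  "FT k m = (\<lambda>j. Tsg (4*k-1-2*j)) ` {..<m}"

lemma card_FT: assumes "m \<le> k" shows "card (FT k m) = m"
proof -
  have "inj_on (\<lambda>j. Tsg (4*k-1-2*j)) {..<m}"
  proof (rule inj_onI)
    fix x y assume "x \<in> {..<m}" "y \<in> {..<m}" "Tsg (4*k-1-2*x) = Tsg (4*k-1-2*y)"
    then have "4*k-1-2*x = 4*k-1-2*y" using Tsg_inj by blast
    then show "x = y" using \<open>x \<in> {..<m}\<close> \<open>y \<in> {..<m}\<close> assms by auto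
  qed
  then show ?thesis unfolding FT_def by (simp add: card_image)
qed

lemma two_notin_Tsg: "f \<ge> 5 \<Longrightarrow> 2 \<notin> Tsg f"
  by (auto simp: Tsg_iff)

lemma Tsg_in_FT_props:
  assumes "Y \<in> FT k m" "m \<le> k"
  obtains j where "j < m" "Y = Tsg (4*k-1-2*j)"
  using assms unfolding FT_def by blast

lemma S_sub_Tsg:
  assumes "k \<ge> 1" "x \<in> Ssg (4*k-1)" "odd f" "2*k+1 \<le> f" "f \<le> 4*k-1"
  shows "x \<in> Tsg f"
proof -
  have "even x \<Longrightarrow> x \<noteq> f" using assms(3) by auto
  then show ?thesis using assms Ssg_iff[OF assms(1), of x] by (auto simp: Tsg_iff)
qed

lemma S_sub_Jsg:
  assumes "k \<ge> 1" "x \<in> Ssg (4*k-1)" "g \<le> 4*k-1"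
  shows "x \<in> Jsg g"
  using assms Ssg_iff[OF assms(1), of x] by (auto simp: Jsg_def)

lemma odd_notin_S:
  assumes "k \<ge> 1" "odd f" "f < 4*k"
  shows "f \<notin> Ssg (4*k-1)"
  using assms Ssg_iff[OF assms(1), of f] by auto


lemma gen_fact:
  assumes k: "k \<ge> 1" and m: "1 \<le> m" "m < k" and g: "g = 4*k-1-2*m"
    and Xi: "irreducible_ns X" and XS: "\<forall>x\<in>Ssg (4*k-1). x \<in> X"
    and Xlow: "\<forall>x. odd x \<and> 2*k \<le> x \<and> x \<le> g \<longrightarrow> x \<notin> X"
    and Xhigh: "\<forall>x. odd x \<and> g < x \<and> x < 4*k \<longrightarrow> x \<in> X"
    and XF: "X \<notin> FT k m"
  shows "is_factorization (Ssg (4*k-1)) (insert X (FT k m)) \<and> card (insert X (FT k m)) = m+1"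
proof
  let ?S = "Ssg (4*k-1)"
  let ?F = "insert X (FT k m)"
  have fin: "finite (FT k m)" unfolding FT_def by simp
  show "card ?F = m + 1" using card_FT[of m k] m XF fin by simp
  have memF: "Y \<in> FT k m \<longleftrightarrow> (\<exists>j<m. Y = Tsg (4*k-1-2*j))" for Y
    unfolding FT_def by auto
  have fodd: "odd (4*k-1-2*j)" if "j < m" for j using that m k by presburger
  have flo: "2*k+1 \<le> 4*k-1-2*j" if "j < m" for j using that m k by linarith
  have fhi: "4*k-1-2*j \<le> 4*k-1" for j by simp
  have fg: "g < 4*k-1-2*j" if "j < m" for j using that m k g by linarith
  have godd: "odd g" using g m k by presburger
  have glo: "2*k+1 \<le> g" using g m k by linarith
  show "is_factorization ?S ?F"
  proof (rule fact_suff)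
    show "finite ?F" using fin by simp
    show "?F \<noteq> {}" by simp
    show "\<forall>Y\<in>?F. irreducible_ns Y"
    proof
      fix Y assume "Y \<in> ?F"
      then show "irreducible_ns Y"
      proof
        assume "Y = X" then show ?thesis using Xi by simp
      next
        assume "Y \<in> FT k m"
        then obtain j where j: "j < m" "Y = Tsg (4*k-1-2*j)" using memF by blast
        show ?thesis using irr_Tsg[OF fodd[OF j(1)]] flo[OF j(1)] j k by simp
      qed
    qed
    show "\<Inter>?F = ?S"
    proof (rule set_eqI)
      fix x
      show "x \<in> \<Inter>?F \<longleftrightarrow> x \<in> ?S"
      proof
        assume "x \<in> ?S"
        then have "x \<in> X" using XS by blast
        moreover have "x \<in> Y" if "Y \<in> FT k m" for Y
        proof -
          obtain j where j: "j < m" "Y = Tsg (4*k-1-2*j)" using memF \<open>Y \<in> FT k m\<close> by blast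
          show ?thesis using S_sub_Tsg[OF k \<open>x \<in> ?S\<close> fodd[OF j(1)] flo[OF j(1)] fhi] j(2) by simp
        qed
        ultimately show "x \<in> \<Inter>?F" by blast
      next
        assume xi: "x \<in> \<Inter>?F"
        then have xX: "x \<in> X" by simp
        have xT: "x \<in> Tsg (4*k-1-2*j)" if "j < m" for j
        proof -
          have "Tsg (4*k-1-2*j) \<in> FT k m" using that unfolding FT_def by blast
          then show ?thesis using xi by blast
        qed
        have "x \<in> Tsg (4*k-1)" using xT[of 0] m by simp
        then have c: "x = 0 \<or> (2*k \<le> x \<and> x < 4*k-1) \<or> 4*k \<le> x"
          using k by (auto simp: Tsg_iff)
        show "x \<in> ?S"
        proof (rule ccontr)
          assume nS: "x \<notin> ?S"
          have nn: "\<not> (x = 0 \<or> (even x \<and> 2*k \<le> x \<and> x < 4*k) \<or> 4*k \<le> x)"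
            using nS Ssg_iff[OF k, of x] by blast
          then have "x \<noteq> 0" "\<not> 4*k \<le> x" by simp_all
          then have x12: "2*k \<le> x" "x < 4*k-1" using c by blast+
          then have "x < 4*k" by linarith
          then have "odd x" using nn x12 by blast
          note x1 = x12 this
          show False
          proof (cases "x \<le> g")
            case True then show False using Xlow x1 xX by blast
          next
            case False
            have "x < 4*k-1" "4*k-1-2*m < x" using x1 False g by linarith+
            then obtain j where jm: "j < m" and eq: "4*k-1-2*j = x"
              using odd_hit[OF k x1(3)] m by blast
            have "x \<in> Tsg x" using xT[OF jm] unfolding eq .
            moreover have "0 < x" using x1 k by linarith
            ultimately show False using notin_Tsg_self by blast
          qed
        qed
      qed
    qed
    show "\<forall>Y\<in>?F. \<exists>w. w \<notin> ?S \<and> (\<forall>Z\<in>?F. Z \<noteq> Y \<longrightarrow> w \<in> Z)"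
    proof
      fix Y assume "Y \<in> ?F"
      then show "\<exists>w. w \<notin> ?S \<and> (\<forall>Z\<in>?F. Z \<noteq> Y \<longrightarrow> w \<in> Z)"
      proof
        assume Y: "Y = X"
        have "g \<notin> ?S" using odd_notin_S[OF k godd] g k by linarith
        moreover have "\<forall>Z\<in>?F. Z \<noteq> Y \<longrightarrow> g \<in> Z"
        proof (intro ballI impI)
          fix Z assume "Z \<in> ?F" "Z \<noteq> Y"
          then have "Z \<in> FT k m" using Y by simp
          then obtain j where j: "j < m" "Z = Tsg (4*k-1-2*j)" using memF by blast
          show "g \<in> Z" using j fg[OF j(1)] glo k by (auto simp: Tsg_iff)
        qed
        ultimately show ?thesis by blast
      next
        assume "Y \<in> FT k m"
        then obtain j where j: "j < m" "Y = Tsg (4*k-1-2*j)" using memF by blast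
        let ?f = "4*k-1-2*j"
        have "?f \<notin> ?S" using odd_notin_S[OF k fodd[OF j(1)]] k by linarith
        moreover have "\<forall>Z\<in>?F. Z \<noteq> Y \<longrightarrow> ?f \<in> Z"
        proof (intro ballI impI)
          fix Z assume Z: "Z \<in> ?F" "Z \<noteq> Y"
          show "?f \<in> Z"
          proof (cases "Z = X")
            case True
            have "?f < 4*k" using k by linarith
            then show ?thesis using Xhigh fodd[OF j(1)] fg[OF j(1)] True by blast
          next
            case False
            then have "Z \<in> FT k m" using Z by simp
            then obtain i where i: "i < m" "Z = Tsg (4*k-1-2*i)" using memF by blast
            have "i \<noteq> j" using i j Z by auto
            then have "?f \<noteq> 4*k-1-2*i" using i j m by linarith
            then show ?thesis using i flo[OF j(1)] k by (auto simp: Tsg_iff)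
          qed
        qed
        ultimately show ?thesis by blast
      qed
    qed
  qed
qed


lemma two_in_Jsg: "2 \<in> Jsg g" by (simp add: Jsg_def)

lemma Jsg_notin_FT:
  assumes "k \<ge> 2" "m \<le> k"
  shows "Jsg g \<notin> FT k m"
proof
  assume "Jsg g \<in> FT k m"
  then obtain j where j: "j < m" "Jsg g = Tsg (4*k-1-2*j)" unfolding FT_def by blast
  have "4*k-1-2*j \<ge> 5" using j assms by linarith
  then have "2 \<notin> Tsg (4*k-1-2*j)" by (rule two_notin_Tsg)
  moreover have "2 \<in> Tsg (4*k-1-2*j)" using j(2) two_in_Jsg[of g] by simp
  ultimately show False by blast
qed

lemma fact_J:
  assumes k: "k \<ge> 2" and n: "2 \<le> n" "n \<le> k"
  shows "is_factorization (Ssg (4*k-1)) (insert (Jsg (4*k-1-2*(n-1))) (FT k (n-1)))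
     \<and> card (insert (Jsg (4*k-1-2*(n-1))) (FT k (n-1))) = n"
proof -
  let ?g = "4*k-1-2*(n-1)"
  have k1: "k \<ge> 1" using k by simp
  have go: "odd ?g" using k n by presburger
  have "is_factorization (Ssg (4*k-1)) (insert (Jsg ?g) (FT k (n-1)))
     \<and> card (insert (Jsg ?g) (FT k (n-1))) = (n-1)+1"
  proof (rule gen_fact[OF k1 _ _ refl])
    show "1 \<le> n - 1" "n - 1 < k" using n by auto
    show "irreducible_ns (Jsg ?g)" by (rule irr_Jsg[OF go])
    show "\<forall>x\<in>Ssg (4*k-1). x \<in> Jsg ?g"
      using S_sub_Jsg[OF k1] by (metis diff_le_self)
    show "\<forall>x. odd x \<and> 2*k \<le> x \<and> x \<le> ?g \<longrightarrow> x \<notin> Jsg ?g"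
      by (auto simp: Jsg_def)
    show "\<forall>x. odd x \<and> ?g < x \<and> x < 4*k \<longrightarrow> x \<in> Jsg ?g"
      by (auto simp: Jsg_def)
    show "Jsg ?g \<notin> FT k (n-1)" using Jsg_notin_FT k n by simp
  qed
  then show ?thesis using n by simp
qed

lemma fact_T:
  assumes k: "k \<ge> 2"
  shows "is_factorization (Ssg (4*k-1)) (insert (Tsg (2*k+1)) (FT k (k-1)))
     \<and> card (insert (Tsg (2*k+1)) (FT k (k-1))) = k"
proof -
  have k1: "k \<ge> 1" using k by simp
  have ge: "4*k-1-2*(k-1) = 2*k+1" using k by simp
  have "is_factorization (Ssg (4*k-1)) (insert (Tsg (4*k-1-2*(k-1))) (FT k (k-1)))
     \<and> card (insert (Tsg (4*k-1-2*(k-1))) (FT k (k-1))) = (k-1)+1"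
  proof (rule gen_fact[OF k1 _ _ refl])
    show "1 \<le> k - 1" "k - 1 < k" using k by auto
    have o: "odd (2*k+1)" by simp
    show "irreducible_ns (Tsg (4*k-1-2*(k-1)))" unfolding ge by (rule irr_Tsg[OF o]) (use k in simp)
    show "\<forall>x\<in>Ssg (4*k-1). x \<in> Tsg (4*k-1-2*(k-1))"
      unfolding ge using S_sub_Tsg[OF k1 _ o] k by simp
    show "\<forall>x. odd x \<and> 2*k \<le> x \<and> x \<le> 4*k-1-2*(k-1) \<longrightarrow> x \<notin> Tsg (4*k-1-2*(k-1))"
    proof (intro allI impI)
      fix x assume "odd x \<and> 2*k \<le> x \<and> x \<le> 4*k-1-2*(k-1)"
      then have "x = 2*k+1" unfolding ge by presburger
      then show "x \<notin> Tsg (4*k-1-2*(k-1))" unfolding ge using notin_Tsg_self by simp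
    qed
    show "\<forall>x. odd x \<and> 4*k-1-2*(k-1) < x \<and> x < 4*k \<longrightarrow> x \<in> Tsg (4*k-1-2*(k-1))"
      unfolding ge by (auto simp: Tsg_iff)
    show "Tsg (4*k-1-2*(k-1)) \<notin> FT k (k-1)"
    proof
      assume "Tsg (4*k-1-2*(k-1)) \<in> FT k (k-1)"
      then obtain j where j: "j < k-1" "Tsg (4*k-1-2*(k-1)) = Tsg (4*k-1-2*j)" unfolding FT_def by blast
      then have "4*k-1-2*(k-1) = 4*k-1-2*j" using Tsg_inj by blast
      then show False using j k by linarith
    qed
  qed
  then show ?thesis using ge k by simp
qed

theorem mainTheorem4:
  fixes k :: nat
  assumes "k \<ge> 2"
  shows "(\<forall>n\<in>{2..k}. \<exists>F. is_factorization (Ssg (4 * k - 1)) F \<and> card F = n)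
     \<and> (k \<ge> 3 \<longrightarrow> (\<exists>F1 F2. is_factorization (Ssg (4 * k - 1)) F1 \<and> card F1 = k
                        \<and> is_factorization (Ssg (4 * k - 1)) F2 \<and> card F2 = k \<and> F1 \<noteq> F2))"
proof (intro conjI ballI impI)
  fix n assume "n \<in> {2..k}"
  then show "\<exists>F. is_factorization (Ssg (4 * k - 1)) F \<and> card F = n"
    using fact_J[OF assms, of n] by auto
next
  assume "k \<ge> 3"
  let ?F1 = "insert (Jsg (4*k-1-2*(k-1))) (FT k (k-1))"
  let ?F2 = "insert (Tsg (2*k+1)) (FT k (k-1))"
  have h1: "is_factorization (Ssg (4*k-1)) ?F1 \<and> card ?F1 = k" using fact_J[OF assms _ order_refl] assms by simp
  have h2: "is_factorization (Ssg (4*k-1)) ?F2 \<and> card ?F2 = k" using fact_T[OF assms] .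
  have "?F1 \<noteq> ?F2"
  proof
    assume eq: "?F1 = ?F2"
    have "Jsg (4*k-1-2*(k-1)) \<in> ?F2" unfolding eq[symmetric] by simp
    moreover have "Jsg (4*k-1-2*(k-1)) \<notin> FT k (k-1)" using Jsg_notin_FT assms by simp
    moreover have "Jsg (4*k-1-2*(k-1)) \<noteq> Tsg (2*k+1)"
      using two_in_Jsg two_notin_Tsg[of "2*k+1"] assms by auto
    ultimately show False by simp
  qed
  then show "\<exists>F1 F2. is_factorization (Ssg (4 * k - 1)) F1 \<and> card F1 = k
                        \<and> is_factorization (Ssg (4 * k - 1)) F2 \<and> card F2 = k \<and> F1 \<noteq> F2"
    using h1 h2 by blast
qed

end
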